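(* For every integer $n\geq 4$, the lexicographically smallest highly bispecial binary word of length $n$ is $001^{n-3}0$, except for $n=6$, for which the lexicographically smallest highly bispecial binary word of length $6$ is $001011$.
   Context: Words are over the binary alphabet $\{0,1\}$; the lexicographic order on words of the same length is induced by $0<1$. A factor of a word $u$ is any (possibly empty) contiguous block of $u$. A factor $x$ of $u$ is left special if both $0x$ and $1x$ are factors of $u$, right special if both $x0$ and $x1$ are factors of $u$, and bispecial if it is both left and right special (the empty word may be bispecial). A binary word of length $n$ is highly bispecial if its number of distinct bispecial factors is maximum among all binary words of length $n$. *)

theory Defs
  imports Main
begin

text \<open>Binary words are lists of booleans, with False standing for the letter 0
  and True for the letter 1.\<close>

type_synonym word = "bool list"

definition is_factor :: "word \<Rightarrow> word \<Rightarrow> bool" where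
  "is_factor x u \<longleftrightarrow> (\<exists>p s. u = p @ x @ s)"

definition left_special :: "word \<Rightarrow> word \<Rightarrow> bool" where
  "left_special u x \<longleftrightarrow> is_factor (False # x) u \<and> is_factor (True # x) u"

definition right_special :: "word \<Rightarrow> word \<Rightarrow> bool" where
  "right_special u x \<longleftrightarrow> is_factor (x @ [False]) u \<and> is_factor (x @ [True]) u"

definition bispecial :: "word \<Rightarrow> word \<Rightarrow> bool" where
  "bispecial u x \<longleftrightarrow> is_factor x u \<and> left_special u x \<and> right_special u x"

definition num_bispecial :: "word \<Rightarrow> nat" where
  "num_bispecial u = card {x. bispecial u x}"

definition highly_bispecial :: "word \<Rightarrow> bool" where
  "highly_bispecial u \<longleftrightarrow>
     (\<forall>v. length v = length u \<longrightarrow> num_bispecial v \<le> num_bispecial u)"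

definition lex_less :: "word \<Rightarrow> word \<Rightarrow> bool" where
  "lex_less u v \<longleftrightarrow> (u, v) \<in> lexord {(a, b). a < b}"

definition lex_smallest_hb :: "nat \<Rightarrow> word \<Rightarrow> bool" where
  "lex_smallest_hb n w \<longleftrightarrow> length w = n \<and> highly_bispecial w \<and>
     (\<forall>v. length v = n \<and> highly_bispecial v \<and> v \<noteq> w \<longrightarrow> lex_less w v)"

end

theory Submission
  imports Defs "HOL-Library.Sublist"
begin

lemma is_factor_eq: "is_factor x u = sublist x u"
  by (simp add: is_factor_def sublist_def)

definition RS :: "word \<Rightarrow> word set" where "RS u = {x. right_special u x}"

lemma finite_sublists: "finite {x. sublist x (u::word)}"
  by (metis List.finite_set set_sublists_eq)

lemma RS_sub: "RS u \<subseteq> {x. sublist x u}"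
proof
  fix x assume "x \<in> RS u"
  hence "sublist (x @ [False]) u" by (simp add: RS_def right_special_def is_factor_eq)
  hence "sublist x u" using sublist_order.order_trans[OF sublist_append_rightI] by blast
  thus "x \<in> {x. sublist x u}" by simp
qed

lemma finite_RS: "finite (RS u)"
  using RS_sub finite_sublists finite_subset by blast

lemma snoc_sublist_butlast: "sublist (x @ [b]) u \<Longrightarrow> sublist x (butlast u)"
proof -
  assume "sublist (x @ [b]) u"
  then obtain p q where u: "u = p @ x @ [b] @ q" by (auto simp: sublist_def)
  have "butlast u = p @ x @ butlast ([b] @ q)" unfolding u
    by (simp add: butlast_append)
  then show ?thesis by (metis sublist_appendI)
qed

lemma RS_snoc_new:
  assumes x: "x \<in> RS (u @ [a])" and nx: "x \<notin> RS u"
  shows "suffix x u \<and> sublist x (butlast u) \<and> \<not> sublist (x @ [a]) u"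
proof -
  have xr: "right_special (u @ [a]) x" using x by (simp add: RS_def)
  have f: "sublist (x @ [c]) (u @ [a])" for c
  proof (cases c)
    case True thus ?thesis using xr unfolding right_special_def is_factor_eq by simp
  next
    case False thus ?thesis using xr unfolding right_special_def is_factor_eq by simp
  qed
  have "\<not> right_special u x" using nx by (simp add: RS_def)
  then obtain c where c: "\<not> sublist (x @ [c]) u"
    unfolding right_special_def is_factor_eq by blast
  have "suffix (x @ [c]) (u @ [a]) \<or> sublist (x @ [c]) u"
    using f[of c] by (simp only: sublist_snoc)
  hence "suffix (x @ [c]) (u @ [a])" using c by simp
  hence ca: "c = a" and sx: "suffix x u" by simp_all
  have "suffix (x @ [\<not> a]) (u @ [a]) \<or> sublist (x @ [\<not> a]) u"
    using f[of "\<not> a"] by (simp only: sublist_snoc)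
  moreover have "\<not> suffix (x @ [\<not> a]) (u @ [a])" by simp
  ultimately have "sublist (x @ [\<not> a]) u" by simp
  hence "sublist x (butlast u)" by (rule snoc_sublist_butlast)
  thus ?thesis using sx c ca by simp
qed

lemma RS_single: "RS [a] = {}"
proof -
  have "\<not> (sublist (x @ [False]) [a] \<and> sublist (x @ [True]) [a])" for x
  proof
    assume h: "sublist (x @ [False]) [a] \<and> sublist (x @ [True]) [a]"
    hence "length x = 0" using sublist_length_le by fastforce
    thus False using h by (auto simp: sublist_Cons_right)
  qed
  thus ?thesis by (auto simp: RS_def right_special_def is_factor_eq)
qed

lemma RS_bound:
  "u \<noteq> [] \<Longrightarrow> suffix s u \<Longrightarrow> sublist s (butlast u) \<Longrightarrow> card (RS u) + length s + 1 \<le> length u"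
proof (induction u arbitrary: s rule: rev_induct)
  case Nil thus ?case by simp
next
  case (snoc a u)
  show ?case
  proof (cases "u = []")
    case True
    with snoc.prems show ?thesis by (simp add: RS_single)
  next
    case False
    define L where "L = length ` {t. suffix t u \<and> sublist t (butlast u)}"
    have "L \<subseteq> {..length u}" unfolding L_def using suffix_length_le by fastforce
    hence finL: "finite L" using finite_subset by blast
    have "0 \<in> L" unfolding L_def
      using image_eqI[of 0 length "[]" "{t. suffix t u \<and> sublist t (butlast u)}"] by simp
    define M where "M = Max L"
    have "M \<in> L" using finL \<open>0 \<in> L\<close> unfolding M_def using Max_in by blast
    then obtain t where t: "suffix t u" "sublist t (butlast u)" "M = length t"
      unfolding L_def by auto
    have IH: "card (RS u) + M + 1 \<le> length u" using snoc.IH[OF False t(1,2)] t(3) by simp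
    have leM: "length x \<le> M" if "suffix x u" "sublist x (butlast u)" for x
    proof -
      have "length x \<in> L" unfolding L_def using that by blast
      thus ?thesis unfolding M_def using finL by (rule Max_ge[rotated])
    qed
    have sM: "length s \<le> M + 1"
    proof (cases "s = []")
      case True thus ?thesis by simp
    next
      case False
      have "s = [] \<or> (\<exists>zs. s = zs @ [a] \<and> suffix zs u)"
        using snoc.prems(2) by (simp only: suffix_snoc)
      with False obtain s' where s': "s = s' @ [a]" "suffix s' u" by blast
      have "sublist s u" using snoc.prems(3) by simp
      hence "sublist (s' @ [a]) u" using s'(1) by simp
      hence "sublist s' (butlast u)" by (rule snoc_sublist_butlast)
      hence "length s' \<le> M" by (rule leM[OF s'(2)])
      thus ?thesis using s'(1) by simp
    qed
    define X where "X = (\<lambda>k. drop (length u - k) u) ` {length s..M}"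
    have sub: "RS (u @ [a]) \<subseteq> RS u \<union> X"
    proof
      fix x assume x: "x \<in> RS (u @ [a])"
      show "x \<in> RS u \<union> X"
      proof (cases "x \<in> RS u")
        case True thus ?thesis by simp
      next
        case False
        from RS_snoc_new[OF x False] have h: "suffix x u" "sublist x (butlast u)"
          "\<not> sublist (x @ [a]) u" by auto
        have "length s \<le> length x"
        proof (rule ccontr)
          assume "\<not> length s \<le> length x"
          hence ns: "s \<noteq> []" by auto
          have "s = [] \<or> (\<exists>zs. s = zs @ [a] \<and> suffix zs u)"
            using snoc.prems(2) by (simp only: suffix_snoc)
          with ns obtain s' where s': "s = s' @ [a]" "suffix s' u" by blast
          have "suffix x s'" using suffix_length_suffix[OF h(1) s'(2)] \<open>\<not> length s \<le> length x\<close> s' by simp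
          hence "suffix (x @ [a]) s" using s' by simp
          moreover have "sublist s u" using snoc.prems(3) by simp
          ultimately have "sublist (x @ [a]) u"
            by (rule sublist_order.order_trans[OF suffix_imp_sublist])
          thus False using h(3) by simp
        qed
        moreover have "length x \<le> M" using leM h by simp
        moreover have xe: "drop (length u - length x) u = x"
          using suffix_take[OF h(1)] by (metis append_take_drop_id same_append_eq)
        ultimately have "length x \<in> {length s..M}" by simp
        hence "x \<in> X" unfolding X_def by (rule image_eqI[where f="\<lambda>k. drop (length u - k) u" and x="length x", OF xe[symmetric]])
        thus ?thesis by (rule UnI2)
      qed
    qed
    have "card X \<le> M + 1 - length s" unfolding X_def
      using card_image_le[of "{length s..M}"] by simp
    have "finite X" unfolding X_def by simp
    hence "card (RS (u @ [a])) \<le> card (RS u \<union> X)"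
      using card_mono[OF _ sub] finite_RS by blast
    also have "\<dots> \<le> card (RS u) + card X" by (rule card_Un_le)
    finally show ?thesis using IH sM \<open>card X \<le> M + 1 - length s\<close> by simp
  qed
qed

definition LS :: "word \<Rightarrow> word set" where "LS u = {x. left_special u x}"

lemma LS_rev: "LS u = rev ` RS (rev u)"
proof -
  have "left_special u x = right_special (rev u) (rev x)" for x
    unfolding left_special_def right_special_def is_factor_eq
    by (metis rev.simps(2) sublist_rev)
  hence "LS u = {x. rev x \<in> RS (rev u)}" by (auto simp: LS_def RS_def)
  also have "\<dots> = rev ` RS (rev u)" by (auto simp: image_iff) (metis rev_rev_ident)
  finally show ?thesis .
qed

lemma card_LS: "card (LS u) = card (RS (rev u))"
  unfolding LS_rev by (simp add: card_image)

lemma finite_LS: "finite (LS u)" unfolding LS_rev using finite_RS by simp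

lemma LS_bound:
  assumes "u \<noteq> []" "prefix p u" "sublist p (tl u)"
  shows "card (LS u) + length p + 1 \<le> length u"
proof -
  have "butlast (rev u) = rev (tl u)" by (cases u) auto
  hence "sublist (rev p) (butlast (rev u))" using assms(3) by simp
  moreover have "suffix (rev p) (rev u)" using assms(2) by (simp add: suffix_to_prefix)
  ultimately have "card (RS (rev u)) + length (rev p) + 1 \<le> length (rev u)"
    using RS_bound[of "rev u" "rev p"] assms(1) by simp
  thus ?thesis by (simp add: card_LS)
qed

definition BS :: "word \<Rightarrow> word set" where "BS u = {x. bispecial u x}"

lemma BS_RS: "BS u \<subseteq> RS u" by (auto simp: BS_def RS_def bispecial_def)
lemma BS_LS: "BS u \<subseteq> LS u" by (auto simp: BS_def LS_def bispecial_def)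
lemma nb_eq: "num_bispecial u = card (BS u)" by (simp add: num_bispecial_def BS_def)
lemma finite_BS: "finite (BS u)" using BS_RS finite_RS finite_subset by blast

lemma nb_RS: "num_bispecial u \<le> card (RS u)"
  unfolding nb_eq by (rule card_mono[OF finite_RS BS_RS])
lemma nb_LS: "num_bispecial u \<le> card (LS u)"
  unfolding nb_eq by (rule card_mono[OF finite_LS BS_LS])

lemma nb_by_suffix:
  "u \<noteq> [] \<Longrightarrow> suffix s u \<Longrightarrow> sublist s (butlast u) \<Longrightarrow> num_bispecial u + length s + 1 \<le> length u"
  using RS_bound[of u s] nb_RS[of u] by linarith

lemma nb_by_prefix:
  "u \<noteq> [] \<Longrightarrow> prefix p u \<Longrightarrow> sublist p (tl u) \<Longrightarrow> num_bispecial u + length p + 1 \<le> length u"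
  using LS_bound[of u p] nb_LS[of u] by linarith

lemma sublist_single: "sublist [c] l \<longleftrightarrow> c \<in> set l"
  by (metis in_set_conv_decomp sublist_def append_Cons append_Nil)

lemma max_bound:
  assumes "length u \<ge> 4"
  shows "num_bispecial u + 2 \<le> length u"
proof -
  obtain a rest where u1: "u = a # rest" using assms by (cases u) auto
  have "rest \<noteq> []" using assms u1 by auto
  then obtain mid b where rest: "rest = mid @ [b]" by (metis append_butlast_last_id)
  have u: "u = a # mid @ [b]" using u1 rest by simp
  have mid: "mid \<noteq> []" using assms u by auto
  show ?thesis
  proof (cases "b \<in> set (a # mid)")
    case True
    hence "sublist [b] (butlast u)" by (simp add: u sublist_single butlast_append)
    moreover have "suffix [b] u" unfolding u suffix_def by (rule exI[of _ "a # mid"]) simp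
    ultimately show ?thesis using nb_by_suffix[of u "[b]"] u by simp
  next
    case nb: False
    show ?thesis
    proof (cases "a \<in> set (mid @ [b])")
      case True
      hence "sublist [a] (tl u)" by (simp add: u sublist_single)
      thus ?thesis using nb_by_prefix[of u "[a]"] u by simp
    next
      case False
      obtain c m' where "mid = c # m'" using mid by (cases mid) auto
      with nb False show ?thesis by (cases a; cases b; cases c) auto
    qed
  qed
qed

lemma fac_eq: "y = p @ x @ q \<Longrightarrow> sublist x y" by simp
lemma fac_eq1: "y = x @ q \<Longrightarrow> sublist x y" by simp

lemma rep_shift: "replicate n x @ x # xs = x # replicate n x @ xs"
  by (induct n) auto

lemma FF_bound:
  assumes "sublist [False, False] (tl v)" "prefix [False, False] v"
  shows "num_bispecial v + 3 \<le> length v"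
  using nb_by_prefix[of v "[False,False]"] assms by (cases v) auto

lemma FTFF_tl: "sublist [False,True,False,False] v \<Longrightarrow> sublist [False,False] (tl v)"
proof -
  assume "sublist [False,True,False,False] v"
  then obtain p q where v: "v = p @ [False,True,False,False] @ q" by (auto simp: sublist_def)
  have "tl v = tl ((p @ [False,True]) @ [False,False] @ q)" by (simp add: v)
  also have "\<dots> = tl (p @ [False,True]) @ [False,False] @ q" by (rule tl_append2) simp
  finally have "tl v = tl (p @ [False,True]) @ [False,False] @ q" .
  thus ?thesis by (rule fac_eq)
qed

lemma lemL:
  assumes v: "v = [False, False] @ replicate k True @ [False] @ r"
    and r: "r \<noteq> []" and ne: "v \<noteq> [False, False, True, False, True, True]"
  shows "num_bispecial v + 3 \<le> length v"
proof (cases "sublist [False, False] (tl v)")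
  case True
  have "prefix [False,False] v" by (simp add: v)
  thus ?thesis using FF_bound[OF True] by simp
next
  case noFF: False
  have k: "k \<noteq> 0" using noFF v by (cases k) auto
  obtain c r' where r': "r = c # r'" using r by (cases r) auto
  have c: "c = True"
  proof (rule ccontr)
    assume "c \<noteq> True"
    hence "tl v = (False # replicate k True) @ [False, False] @ r'" by (simp add: v r')
    hence "sublist [False, False] (tl v)" by (rule fac_eq)
    with noFF show False by simp
  qed
  obtain k' where k': "k = Suc k'" using k by (cases k) auto
  define P where "P = [False, False] @ replicate k' True @ [True, False, True]"
  have vP: "v = P @ r'" by (simp add: v r' c P_def k' rep_shift)
  have P1: "sublist [False, False] P" "sublist [False, True] P" "sublist [True, False] P"
  proof -
    have "P = [False, False] @ (replicate k' True @ [True, False, True])" by (simp add: P_def)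
    thus "sublist [False, False] P" by (rule fac_eq1)
    have "P = [False] @ [False, True] @ (replicate k' True @ [False, True])" by (simp add: P_def rep_shift)
    thus "sublist [False, True] P" by (rule fac_eq)
    have "P = ([False, False] @ replicate k' True) @ [True, False] @ [True]" by (simp add: P_def)
    thus "sublist [True, False] P" by (rule fac_eq)
  qed
  have P2: "sublist [True, True] P" if "k' \<noteq> 0"
  proof -
    from that obtain j where j: "k' = Suc j" by (cases k') auto
    have "P = ([False, False] @ replicate j True) @ [True, True] @ [False, True]"
      by (simp add: P_def j rep_shift)
    thus ?thesis by (rule fac_eq)
  qed
  show ?thesis
  proof (cases "r' = []")
    case True
    have bl: "butlast v = [False] @ [False, True] @ (replicate k' True @ [False])"
      using True by (simp add: vP P_def butlast_append rep_shift)
    have sf: "suffix [False, True] v" unfolding suffix_def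
      by (rule exI[of _ "[False,False] @ replicate k' True @ [True]"]) (simp add: vP P_def True)
    have "sublist [False, True] (butlast v)" unfolding bl by (rule sublist_appendI)
    moreover have "v \<noteq> []" by (simp add: vP P_def)
    ultimately show ?thesis using nb_by_suffix[of v "[False,True]"] sf by simp
  next
    case r'ne: False
    have bP: "sublist P (butlast v)" using r'ne by (simp add: vP butlast_append)
    define s where "s = drop (length v - 2) v"
    have lv: "length v \<ge> 2" by (simp add: vP P_def)
    have s: "suffix s v" "length s = 2" unfolding s_def using lv by (auto simp: suffix_drop)
    then obtain x y where sxy: "s = [x, y]" by (auto simp: numeral_2_eq_2 length_Suc_conv)
    show ?thesis
    proof (cases "sublist s (butlast v)")
      case True
      have "v \<noteq> []" by (simp add: vP P_def)
      from nb_by_suffix[OF this s(1) True] show ?thesis using s(2) by simp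
    next
      case notrep: False
      have tr: "sublist t (butlast v)" if "sublist t P" for t
        by (rule sublist_order.order_trans[OF that bP])
      have sTT: "s = [True, True]"
        using notrep tr P1 sxy by (cases x; cases y) auto
      have k'0: "k' = 0" using notrep tr P2 sTT by blast
      obtain d q where q: "r' = d # q" using r'ne by (cases r') auto
      have d: "d = False"
      proof (rule ccontr)
        assume "d \<noteq> False"
        hence vd: "v = [False, False, True, False, True, True] @ q" using vP P_def k'0 q by simp
        show False
        proof (cases "q = []")
          case True thus False using ne vd by simp
        next
          case False
          hence "butlast v = [False, False, True, False] @ [True, True] @ butlast q"
            by (simp add: vd butlast_append)
          hence "sublist [True, True] (butlast v)" by (rule fac_eq)
          thus False using notrep sTT by simp
        qed
      qed
      have vd: "v = [False, False, True, False, True, False] @ q" using vP P_def k'0 q d by simp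
      have "q \<noteq> []"
      proof
        assume "q = []"
        hence "suffix [True,True] [False,False,True,False,True,False]" using vd s(1) sTT by simp
        thus False by (simp add: suffix_to_prefix)
      qed
      then obtain e q' where q': "q = e # q'" by (cases q) auto
      have e: "e = True"
      proof (rule ccontr)
        assume "e \<noteq> True"
        hence "tl v = [False, True, False, True] @ [False, False] @ q'" by (simp add: vd q')
        hence "sublist [False, False] (tl v)" by (rule fac_eq)
    with noFF show False by simp
      qed
      have vv: "v = [False, False, True, False, True, False, True] @ q'" using vd q' e by simp
      define x0 where "x0 = [False, True, False]"
      have "x0 \<in> LS v"
      proof -
        have "sublist (False # x0) v" unfolding x0_def vv by (rule fac_eq1) simp
        moreover have "sublist (True # x0) v" unfolding x0_def vv
          using sublist_appendI[of "[True, False, True, False]" "[False, False]" "True # q'"] by simp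
        ultimately show ?thesis by (simp add: LS_def left_special_def is_factor_eq)
      qed
      moreover have "x0 \<notin> BS v"
      proof
        assume "x0 \<in> BS v"
        hence "sublist (x0 @ [False]) v" by (simp add: BS_def bispecial_def right_special_def is_factor_eq)
        hence "sublist [False, False] (tl v)" unfolding x0_def using FTFF_tl by simp
        thus False using noFF by simp
      qed
      ultimately have sub: "BS v \<subseteq> LS v - {x0}" using BS_LS by blast
      have "card (BS v) \<le> card (LS v - {x0})"
        by (rule card_mono[OF finite_Diff[OF finite_LS] sub])
      also have "\<dots> = card (LS v) - 1" by (rule card_Diff_singleton) fact
      finally have "card (BS v) \<le> card (LS v) - 1" .
      moreover have "card (LS v) + length [False] + 1 \<le> length v"
      proof (rule LS_bound)
        show "v \<noteq> []" by (simp add: vv)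
        show "prefix [False] v" by (simp add: vv)
        have "tl v = [False] @ [True] @ ([False, True, False, True] @ q')" by (simp add: vv)
        thus "sublist [False] (tl v)" by (rule fac_eq1)
      qed
      moreover have "0 < card (LS v)"
        using finite_LS \<open>x0 \<in> LS v\<close> card_gt_0_iff by blast
      ultimately show ?thesis by (simp add: nb_eq)
    qed
  qed
qed

lemma bs_target_lower:
  assumes "m \<ge> 1"
  shows "m + 1 \<le> num_bispecial ([False, False] @ replicate m True @ [False])"
proof -
  define w where "w = [False, False] @ replicate m True @ [False]"
  define S where "S = insert [] (insert [False] ((\<lambda>i. replicate i True) ` {1..m-1}))"
  have fac: "sublist x w" if "w = p @ x @ q" for p x q using that by (simp add: sublist_def) blast
  have rep: "replicate i True \<in> BS w" if i: "1 \<le> i" "i \<le> m - 1" for i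
  proof -
    have im: "i \<le> m" "Suc i \<le> m" using i assms by auto
    have ra: "replicate m True = replicate i True @ replicate (m - i) True"
      using im by (metis le_add_diff_inverse replicate_add)
    have rb: "replicate m True = replicate (Suc i) True @ replicate (m - Suc i) True"
      using im by (metis le_add_diff_inverse replicate_add)
    have rc: "replicate m True = replicate (m - i) True @ replicate i True"
      using im by (metis le_add_diff_inverse2 replicate_add)
    have a: "sublist (False # replicate i True) w"
      by (rule fac[of "[False]" _ "replicate (m - i) True @ [False]"])
         (unfold w_def, subst ra, simp)
    have b: "sublist (replicate (Suc i) True) w"
      by (rule fac[of "[False, False]" _ "replicate (m - Suc i) True @ [False]"])
         (unfold w_def, subst rb, simp)
    have c: "sublist (replicate i True @ [False]) w"
      by (rule fac[of "[False, False] @ replicate (m - i) True" _ "[]"])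
         (unfold w_def, subst rc, simp)
    have b1: "sublist (True # replicate i True) w" "sublist (replicate i True @ [True]) w"
      using b by (simp_all add: replicate_append_same)
    have "sublist (replicate i True) w"
      using c by (meson sublist_append_rightI sublist_order.order_trans)
    thus ?thesis using a b1 c
      by (simp add: BS_def bispecial_def left_special_def right_special_def is_factor_eq)
  qed
  obtain m' where m': "m = Suc m'" using assms by (cases m) auto
  have w': "w = [False, False] @ [True] @ replicate m' True @ [False]" by (simp add: w_def m')
  have F: "[False] \<in> BS w"
  proof -
    have "w = [False, False] @ (replicate m True @ [False])" by (simp add: w_def)
    hence "sublist [False, False] w" by (rule fac_eq1)
    moreover have "w = [False] @ [False, True] @ (replicate m' True @ [False])" by (simp add: w_def m')
    hence "sublist [False, True] w" by (rule fac_eq)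
    moreover have "w = ([False, False] @ replicate m' True) @ [True, False] @ []"
      by (simp add: w_def m' rep_shift)
    hence "sublist [True, False] w" by (rule fac_eq)
    ultimately have "sublist [False, False] w" "sublist [False, True] w" "sublist [True, False] w"
      by blast+
    thus ?thesis by (simp add: BS_def bispecial_def left_special_def right_special_def is_factor_eq
          sublist_single w_def)
  qed
  have E: "[] \<in> BS w" unfolding BS_def bispecial_def left_special_def right_special_def is_factor_eq
    by (simp add: sublist_single w_def m')
  have "S \<subseteq> BS w" using rep F E unfolding S_def by auto
  moreover have "card S = m + 1"
  proof -
    have inj: "inj_on (\<lambda>i. replicate i True) {1..m-1}" by (rule inj_onI) (metis length_replicate)
    have "[] \<notin> (\<lambda>i. replicate i True) ` {1..m-1}" by auto
    moreover have "[False] \<notin> (\<lambda>i. replicate i True) ` {1..m-1}"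
      by (auto simp: image_iff) (metis Suc_le_D list.inject replicate_Suc)
    ultimately show ?thesis using card_image[OF inj] m' by (simp add: S_def)
  qed
  ultimately show ?thesis unfolding nb_eq w_def[symmetric]
    by (metis card_mono finite_BS)
qed

lemma bs_6: "4 \<le> num_bispecial [False, False, True, False, True, True]"
proof -
  have "{[], [False], [True], [False, True]} \<subseteq> BS [False, False, True, False, True, True]"
    by (simp add: BS_def bispecial_def left_special_def right_special_def is_factor_eq sublist_Cons_right)
  from card_mono[OF finite_BS this] show ?thesis by (simp add: nb_eq)
qed

lemma lex_decomp:
  assumes "lex_less v w" "length v = length w"
  shows "\<exists>u r1 r2. v = u @ False # r1 \<and> w = u @ True # r2"
proof -
  from assms(1) have "(\<exists>a x. w = v @ a # x) \<or>
      (\<exists>u a b x y. (a, b) \<in> {(a, b). a < b} \<and> v = u @ a # x \<and> w = u @ b # y)"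
    unfolding lex_less_def lexord_def by blast
  moreover have "\<not> (\<exists>a x. w = v @ a # x)" using assms(2) by auto
  ultimately obtain u a b x y where "a < b" "v = u @ a # x" "w = u @ b # y" by blast
  moreover have "a = False" "b = True" using \<open>a < b\<close> by (cases a; cases b; simp)+
  ultimately show ?thesis by blast
qed

lemma lex_total:
  assumes "v \<noteq> w" "\<not> lex_less w v" shows "lex_less v w"
proof -
  have "\<forall>a b::bool. (a,b) \<in> {(a, b). a < b} \<or> a = b \<or> (b,a) \<in> {(a, b). a < b}"
    by auto
  from lexord_linear[OF this, of v w] assms show ?thesis unfolding lex_less_def by blast
qed

lemma lex_irrefl: "\<not> lex_less v v"
  unfolding lex_less_def by (rule lexord_irreflexive) simp

lemma below_general:
  assumes m: "m \<ge> 1" and v: "v = u @ False # r1"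
    and w: "[False, False] @ replicate m True @ [False] = u @ True # r2"
    and len: "length v = m + 3"
  shows "\<exists>k r. v = [False, False] @ replicate k True @ [False] @ r \<and> r \<noteq> []"
proof -
  define W where "W = [False, False] @ replicate m True @ [False]"
  define i where "i = length u"
  have Wi: "W ! i = True" using w by (simp add: W_def i_def)
  have "length u + Suc (length r2) = m + 3" using arg_cong[OF w, of length] by simp
  hence iW: "i < m + 3" by (simp add: i_def)
  have i2: "i \<ge> 2"
  proof (rule ccontr)
    assume "\<not> i \<ge> 2"
    hence "i = 0 \<or> i = 1" by auto
    thus False using Wi by (auto simp: W_def)
  qed
  have im: "i \<le> m + 1"
  proof (rule ccontr)
    assume "\<not> i \<le> m + 1"
    hence "i = m + 2" using iW by auto
    thus False using Wi by (simp add: W_def nth_append)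
  qed
  have "u = take i W" using w by (simp add: W_def i_def)
  also have "\<dots> = [False, False] @ replicate (i - 2) True"
  proof -
    define j where "j = i - 2"
    have ij: "i = Suc (Suc j)" using i2 unfolding j_def by arith
    have jm: "j \<le> m" using im ij by simp
    show ?thesis using jm by (simp add: W_def ij take_append min_def)
  qed
  finally have u: "u = [False, False] @ replicate (i - 2) True" .
  have "r1 \<noteq> []" using len v im by (auto simp: i_def)
  thus ?thesis using u v by auto
qed

lemma below_6:
  assumes v: "v = u @ False # r1"
    and w: "[False, False, True, False, True, True] = u @ True # r2"
    and len: "length v = 6"
  shows "\<exists>k r. v = [False, False] @ replicate k True @ [False] @ r \<and> r \<noteq> []"
proof -
  define W where "W = [False, False, True, False, True, True]"
  define i where "i = length u"
  have Wi: "W ! i = True" using w by (simp add: W_def i_def)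
  have "length u + Suc (length r2) = 6" using arg_cong[OF w, of length] by simp
  hence iW: "i < 6" by (simp add: i_def)
  have u: "u = take i W" using w by (simp add: W_def i_def)
  have "i = 2 \<or> i = 4 \<or> i = 5" using Wi iW by (auto simp: W_def less_Suc_eq numeral_eq_Suc)
  moreover have "length r1 = 5 - i" using len v by (simp add: i_def)
  ultimately consider "i = 2" "length r1 = 3" | "i = 4" "length r1 = 1" | "i = 5" "r1 = []" by auto
  thus ?thesis
  proof cases
    case 1
    hence "v = [False, False] @ replicate 0 True @ [False] @ r1" "r1 \<noteq> []"
      using u v by (auto simp: W_def numeral_eq_Suc)
    thus ?thesis by blast
  next
    case 2
    hence "v = [False, False] @ replicate 1 True @ [False] @ (False # r1)"
      using u v by (simp add: W_def numeral_eq_Suc)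
    thus ?thesis by blast
  next
    case 3
    hence "v = [False, False] @ replicate 1 True @ [False] @ [True, False]"
      using u v by (simp add: W_def numeral_eq_Suc)
    thus ?thesis by blast
  qed
qed

theorem mainTheorem4:
  fixes n :: nat
  assumes "n \<ge> 4"
  shows "lex_smallest_hb n
           (if n = 6 then [False, False, True, False, True, True]
            else [False, False] @ replicate (n - 3) True @ [False])"
proof -
  define w where "w = (if n = 6 then [False, False, True, False, True, True]
            else [False, False] @ replicate (n - 3) True @ [False])"
  have lenw: "length w = n" using assms unfolding w_def by (cases "n = 6") simp_all
  have maxb: "num_bispecial v + 2 \<le> n" if "length v = n" for v
    using max_bound[of v] that assms by simp
  have nbw: "num_bispecial w + 2 = n"
  proof -
    have "n \<le> num_bispecial w + 2"
    proof (cases "n = 6")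
      case True thus ?thesis using bs_6 by (simp add: w_def)
    next
      case False
      have h: "n - 3 + 1 \<le> num_bispecial ([False, False] @ replicate (n - 3) True @ [False])"
        by (rule bs_target_lower) (use assms in simp)
      have "w = [False, False] @ replicate (n - 3) True @ [False]" using False by (simp add: w_def)
      thus ?thesis using h assms by simp
    qed
    thus ?thesis using maxb[OF lenw] by simp
  qed
  have below: "num_bispecial v + 3 \<le> n" if lv: "length v = n" and lt: "lex_less v w" for v
  proof -
    obtain u r1 r2 where ur: "v = u @ False # r1" "w = u @ True # r2"
      using lex_decomp[OF lt] lv lenw by auto
    have vw: "v \<noteq> w" using lt lex_irrefl by blast
    have "\<exists>k r. v = [False, False] @ replicate k True @ [False] @ r \<and> r \<noteq> []"
    proof (cases "n = 6")
      case True
      thus ?thesis using below_6[OF ur(1)] ur(2) lv by (simp add: w_def)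
    next
      case False
      thus ?thesis using below_general[of "n - 3" v u r1 r2] ur lv assms by (simp add: w_def)
    qed
    then obtain k r where kr: "v = [False, False] @ replicate k True @ [False] @ r" "r \<noteq> []" by blast
    have "v \<noteq> [False, False, True, False, True, True]"
    proof (cases "n = 6")
      case True thus ?thesis using vw by (simp add: w_def)
    next
      case False thus ?thesis using lv by auto
    qed
    from lemL[OF kr this] show ?thesis using lv by simp
  qed
  have hbw: "highly_bispecial w"
    unfolding highly_bispecial_def using maxb nbw lenw by (metis add_le_cancel_right)
  have "lex_less w v" if "length v = n" "highly_bispecial v" "v \<noteq> w" for v
  proof (rule ccontr)
    assume "\<not> lex_less w v"
    hence "lex_less v w" using lex_total that(3) by blast
    hence "num_bispecial v + 3 \<le> n" using below that(1) by blast
    moreover have "num_bispecial w \<le> num_bispecial v" using that(2) lenw that(1)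
      unfolding highly_bispecial_def by simp
    ultimately show False using nbw by simp
  qed
  thus ?thesis unfolding lex_smallest_hb_def w_def[symmetric] using lenw hbw by blast
qed

end
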